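(* With the model and matrices $V(z),U(z)$ as in the context, let $\hat V(z),\hat U(z)$ be the $(s+1)\times(s+1)$ matrices that coincide with $V(z),U(z)$ in columns $0,\dots,s-1$, and whose last column (column $s$) is \[ \hat V_{i,s}=1\ (0\le i<s),\quad \hat V_{s,s}=\bar\alpha;\qquad \hat U_{i,s}=\tilde\lambda\tilde p_a+i\tilde\theta\tilde\mu\ (0\le i<s),\quad \hat U_{s,s}=\tilde\lambda_{ob}+s\tilde\theta\tilde\mu . \] Then for any open set $\Omega\subseteq\mathbb{C}\setminus\{1\}$ and any differentiable row-vector function $\mathbf p:\Omega\to\mathbb{C}^{s+1}$, $\mathbf p'V=\mathbf pU$ on $\Omega$ if and only if $\mathbf p'\hat V=\mathbf p\hat U$ on $\Omega$. In particular the stationary generating function $\mathbf p(z)$ satisfies $\mathbf p'(z)\hat V(z)=\mathbf p(z)\hat U(z)$ for $|z|<1$; equivalently, \[ \sum_{i=0}^{s-1}p_i'(z)+\bar\alpha p_s'(z)=\sum_{i=0}^{s-1}(\tilde\lambda\tilde p_a+i\tilde\theta\tilde\mu)p_i(z)+(\tilde\lambda_{ob}+s\tilde\theta\tilde\mu)p_s(z) \] together with the first $s$ scalar equations of $\mathbf p'V=\mathbf pU$.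
   Context: Parameters: integer $s\ge1$, $\lambda,\mu,\nu>0$, $p_a,\tilde p_a\ge0$ with $p_a+\tilde p_a=1$, $\tilde\alpha_0\in[0,1]$, $p\in[0,1]$, $\bar p=1-p$, $\bar\alpha\in[0,1]$, $\bar\theta,\tilde\theta\ge0$; $\lambda_{ob}=\lambda\tilde\alpha_0$, $\tilde\lambda=\lambda/\nu$, $\tilde\mu=\mu/\nu$, $\tilde\lambda_{ob}=\lambda_{ob}/\nu$. $V(z),U(z)$ are the $(s+1)\times(s+1)$ matrices (indices $0..s$, other entries zero): $V_{i,i}=z-\bar p$, $V_{i,i+1}=-p$ for $i<s$, $V_{s,s}=\bar\alpha(z-1)$; $U_{i,i+1}=\tilde\lambda p_a$ for $i<s$, $U_{i,i-1}=i\tilde\mu(\bar\theta+\tilde\theta z)$ for $1\le i\le s$, $U_{i,i}=\tilde\lambda(z\tilde p_a-1)-i\tilde\mu(\bar\theta+\tilde\theta)$ for $i<s$, $U_{s,s}=\tilde\lambda_{ob}(z-1)-s\tilde\mu(\bar\theta+\tilde\theta)$. The "stationary generating function" is $\mathbf p(z)=(p_0,\dots,p_s)$, $p_i(z)=\sum_j\pi_{i,j}z^j$, of the stationary distribution (assumed to exist) of the Markovian multiserver retrial QBD whose level-up block is $A$ ($A_{i,i}=\lambda\tilde p_a$ for $i<s$, $A_{s,s}=\lambda\tilde\alpha_0$, $A_{i,i-1}=i\mu\tilde\theta$), level-$j$ down block $jC$ ($C_{i,i}=\nu\bar p$, $C_{i,i+1}=\nu p$ for $i<s$, $C_{s,s}=\nu\bar\alpha$),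 and diagonal block $B-\tilde A-j\tilde C$ ($B_{i,i+1}=\lambda p_a$, $B_{i,i-1}=i\mu\bar\theta$, rows of $B$ sum to 0; $\tilde A,\tilde C$ diagonal row-sum matrices); it satisfies $\mathbf p'V=\mathbf pU$ on $|z|<1$. *)

theory Defs
  imports "HOL-Analysis.Analysis"
begin

text \<open>Matrices are represented as functions nat => nat => complex, only the entries
with row and column indices in 0..s are relevant (all others are 0).
Parameters: lam = lambda, mu, nu, pa = p_a, pta = tilde p_a, a0 = tilde alpha_0,
p, abar = bar alpha, thb = bar theta, tht = tilde theta; bar p = 1 - p,
tilde lambda = lam/nu, tilde mu = mu/nu, tilde lambda_ob = lam*a0/nu.\<close>

definition Vmat :: "nat \<Rightarrow> real \<Rightarrow> real \<Rightarrow> complex \<Rightarrow> nat \<Rightarrow> nat \<Rightarrow> complex" where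
  "Vmat s p abar z i j =
     (if i < s \<and> j = i then z - of_real (1 - p)
      else if i < s \<and> j = i + 1 then - of_real p
      else if i = s \<and> j = s then of_real abar * (z - 1)
      else 0)"

definition Umat :: "nat \<Rightarrow> real \<Rightarrow> real \<Rightarrow> real \<Rightarrow> real \<Rightarrow> real \<Rightarrow> real \<Rightarrow> real \<Rightarrow> real
                    \<Rightarrow> complex \<Rightarrow> nat \<Rightarrow> nat \<Rightarrow> complex" where
  "Umat s lam mu nu pa pta a0 thb tht z i j =
     (let lt = of_real (lam / nu); mt = of_real (mu / nu); lob = of_real (lam * a0 / nu)
      in if i < s \<and> j = i + 1 then lt * of_real pa
      else if 1 \<le> i \<and> i \<le> s \<and> j = i - 1 then of_nat i * mt * (of_real thb + of_real tht * z)
      else if i < s \<and> j = i then lt * (z * of_real pta - 1) - of_nat i * mt * of_real (thb + tht)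
      else if i = s \<and> j = s then lob * (z - 1) - of_nat s * mt * of_real (thb + tht)
      else 0)"

definition Vhat :: "nat \<Rightarrow> real \<Rightarrow> real \<Rightarrow> complex \<Rightarrow> nat \<Rightarrow> nat \<Rightarrow> complex" where
  "Vhat s p abar z i j =
     (if j < s then Vmat s p abar z i j
      else if j = s then (if i < s then 1 else if i = s then of_real abar else 0)
      else 0)"

definition Uhat :: "nat \<Rightarrow> real \<Rightarrow> real \<Rightarrow> real \<Rightarrow> real \<Rightarrow> real \<Rightarrow> real \<Rightarrow> real \<Rightarrow> real
                    \<Rightarrow> complex \<Rightarrow> nat \<Rightarrow> nat \<Rightarrow> complex" where
  "Uhat s lam mu nu pa pta a0 thb tht z i j =
     (if j < s then Umat s lam mu nu pa pta a0 thb tht z i j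
      else if j = s then
        (if i < s then of_real (lam / nu * pta + real i * tht * (mu / nu))
         else if i = s then of_real (lam * a0 / nu + real s * tht * (mu / nu))
         else 0)
      else 0)"

definition row_ode :: "nat \<Rightarrow> (complex \<Rightarrow> nat \<Rightarrow> nat \<Rightarrow> complex) \<Rightarrow> (complex \<Rightarrow> nat \<Rightarrow> nat \<Rightarrow> complex)
                       \<Rightarrow> (nat \<Rightarrow> complex \<Rightarrow> complex) \<Rightarrow> complex set \<Rightarrow> bool" where
  "row_ode s M N P \<Omega> \<longleftrightarrow>
     (\<forall>z\<in>\<Omega>. \<forall>j\<le>s. (\<Sum>i\<le>s. deriv (P i) z * M z i j) = (\<Sum>i\<le>s. P i z * N z i j))"

end

theory Submission
  imports Defs
begin

lemma Vrow:
  assumes "i \<le> s"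
  shows "(\<Sum>j\<le>s. Vmat s p abar z i j) = (z - 1) * Vhat s p abar z i s"
proof (cases "i < s")
  case True
  have "Vmat s p abar z i = (\<lambda>j. (if j = i then z - of_real (1 - p) else 0) + (if j = i+1 then - of_real p else 0))"
    using True by (auto simp: Vmat_def fun_eq_iff)
  then have "(\<Sum>j\<le>s. Vmat s p abar z i j) = (z - of_real (1-p)) + (- of_real p)"
    using True by (simp add: sum.distrib)
  then show ?thesis using True by (simp add: Vhat_def)
next
  case False
  then have "i = s" using assms by simp
  then have "Vmat s p abar z i = (\<lambda>j. if j = s then of_real abar * (z - 1) else 0)"
    by (auto simp: Vmat_def fun_eq_iff)
  then show ?thesis using \<open>i = s\<close> by (simp add: Vhat_def mult.commute)
qed

lemma Urow:
  assumes "i \<le> s" and "pa + pta = 1"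
  shows "(\<Sum>j\<le>s. Umat s lam mu nu pa pta a0 thb tht z i j) = (z - 1) * Uhat s lam mu nu pa pta a0 thb tht z i s"
proof -
  define lt where "lt = (of_real (lam / nu) :: complex)"
  define mt where "mt = (of_real (mu / nu) :: complex)"
  define lob where "lob = (of_real (lam * a0 / nu) :: complex)"
  show ?thesis
  proof (cases "i < s")
    case True
    have "Umat s lam mu nu pa pta a0 thb tht z i = (\<lambda>j. (if j = i+1 then lt * of_real pa else 0)
        + (if j = i - 1 then (if 1 \<le> i then of_nat i * mt * (of_real thb + of_real tht * z) else 0) else 0)
        + (if j = i then lt * (z * of_real pta - 1) - of_nat i * mt * of_real (thb + tht) else 0))"
      using True by (auto simp: Umat_def fun_eq_iff lt_def mt_def Let_def)
    then have "(\<Sum>j\<le>s. Umat s lam mu nu pa pta a0 thb tht z i j) = lt * of_real pa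
        + (if 1 \<le> i then of_nat i * mt * (of_real thb + of_real tht * z) else 0)
        + (lt * (z * of_real pta - 1) - of_nat i * mt * of_real (thb + tht))"
      using True by (simp add: sum.distrib, linarith)
    also have "\<dots> = (z - 1) * (lt * of_real pta + of_nat i * of_real tht * mt)"
    proof -
      have pa: "(of_real pa :: complex) = 1 - of_real pta" using assms(2)
        by (metis add_diff_cancel_right' of_real_1 of_real_diff)
      show ?thesis by (cases "i = 0") (simp_all add: pa algebra_simps)
    qed
    finally show ?thesis using True by (simp add: Uhat_def lt_def mt_def)
  next
    case False
    then have iss: "i = s" using assms by simp
    have "Umat s lam mu nu pa pta a0 thb tht z i = (\<lambda>j. (if j = s - 1 then of_nat s * mt * (of_real thb + of_real tht * z) else 0)
        + (if j = s then lob * (z - 1) - of_nat s * mt * of_real (thb + tht) else 0))"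
      using iss assms(1) False by (auto simp: Umat_def fun_eq_iff lob_def mt_def Let_def)
    then have "(\<Sum>j\<le>s. Umat s lam mu nu pa pta a0 thb tht z i j) = of_nat s * mt * (of_real thb + of_real tht * z)
        + (lob * (z - 1) - of_nat s * mt * of_real (thb + tht))"
      by (simp add: sum.distrib)
    also have "\<dots> = (z - 1) * (lob + of_nat s * of_real tht * mt)" by (simp add: algebra_simps)
    finally show ?thesis using iss by (simp add: Uhat_def lob_def mt_def)
  qed
qed

theorem lemma5p2:
  fixes s :: nat and lam mu nu pa pta a0 p abar thb tht :: real
    and \<Omega> :: "complex set" and P :: "nat \<Rightarrow> complex \<Rightarrow> complex"
  assumes "s \<ge> 1" and "lam > 0" and "mu > 0" and "nu > 0"
    and "pa \<ge> 0" and "pta \<ge> 0" and "pa + pta = 1"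
    and "0 \<le> a0" and "a0 \<le> 1" and "0 \<le> p" and "p \<le> 1"
    and "0 \<le> abar" and "abar \<le> 1" and "thb \<ge> 0" and "tht \<ge> 0"
    and "open \<Omega>" and "\<Omega> \<subseteq> - {1}"
    and "\<forall>i\<le>s. \<forall>z\<in>\<Omega>. P i field_differentiable (at z)"
  shows "row_ode s (Vmat s p abar) (Umat s lam mu nu pa pta a0 thb tht) P \<Omega>
     \<longleftrightarrow> row_ode s (Vhat s p abar) (Uhat s lam mu nu pa pta a0 thb tht) P \<Omega>"
proof -
  have key: "(\<forall>j\<le>s. (\<Sum>i\<le>s. deriv (P i) z * Vmat s p abar z i j) = (\<Sum>i\<le>s. P i z * Umat s lam mu nu pa pta a0 thb tht z i j))
    \<longleftrightarrow> (\<forall>j\<le>s. (\<Sum>i\<le>s. deriv (P i) z * Vhat s p abar z i j) = (\<Sum>i\<le>s. P i z * Uhat s lam mu nu pa pta a0 thb tht z i j))"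
    if z: "z \<in> \<Omega>" for z
  proof -
    have z1: "z - 1 \<noteq> 0" using z assms(17) by auto
    define L where "L j = (\<Sum>i\<le>s. deriv (P i) z * Vmat s p abar z i j)" for j
    define R where "R j = (\<Sum>i\<le>s. P i z * Umat s lam mu nu pa pta a0 thb tht z i j)" for j
    define Lh where "Lh = (\<Sum>i\<le>s. deriv (P i) z * Vhat s p abar z i s)"
    define Rh where "Rh = (\<Sum>i\<le>s. P i z * Uhat s lam mu nu pa pta a0 thb tht z i s)"
    have sL: "(\<Sum>j\<le>s. L j) = (z - 1) * Lh"
    proof -
      have "(\<Sum>j\<le>s. L j) = (\<Sum>i\<le>s. deriv (P i) z * (\<Sum>j\<le>s. Vmat s p abar z i j))"
        unfolding L_def by (subst sum.swap) (simp add: sum_distrib_left)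
      also have "\<dots> = (\<Sum>i\<le>s. deriv (P i) z * ((z - 1) * Vhat s p abar z i s))"
        by (rule sum.cong) (simp_all add: Vrow)
      also have "\<dots> = (z - 1) * Lh" unfolding Lh_def
        by (simp add: sum_distrib_left algebra_simps)
      finally show ?thesis .
    qed
    have sR: "(\<Sum>j\<le>s. R j) = (z - 1) * Rh"
    proof -
      have "(\<Sum>j\<le>s. R j) = (\<Sum>i\<le>s. P i z * (\<Sum>j\<le>s. Umat s lam mu nu pa pta a0 thb tht z i j))"
        unfolding R_def by (subst sum.swap) (simp add: sum_distrib_left)
      also have "\<dots> = (\<Sum>i\<le>s. P i z * ((z - 1) * Uhat s lam mu nu pa pta a0 thb tht z i s))"
        by (rule sum.cong) (simp_all add: Urow assms(7))
      also have "\<dots> = (z - 1) * Rh" unfolding Rh_def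
        by (simp add: sum_distrib_left algebra_simps)
      finally show ?thesis .
    qed
    have hatj: "(\<Sum>i\<le>s. deriv (P i) z * Vhat s p abar z i j) = L j"
      "(\<Sum>i\<le>s. P i z * Uhat s lam mu nu pa pta a0 thb tht z i j) = R j" if "j < s" for j
      using that by (simp_all add: L_def R_def Vhat_def Uhat_def)
    have split: "(\<Sum>j\<le>s. f j) = (\<Sum>j<s. f j) + f s" for f :: "nat \<Rightarrow> complex"
      by (simp add: lessThan_Suc_atMost[symmetric])
    have A: "(\<forall>j\<le>s. L j = R j) \<longleftrightarrow> (\<forall>j<s. L j = R j) \<and> Lh = Rh"
    proof
      assume h: "\<forall>j\<le>s. L j = R j"
      then have "(\<Sum>j\<le>s. L j) = (\<Sum>j\<le>s. R j)" by simp
      then have "Lh = Rh" using sL sR z1 by simp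
      then show "(\<forall>j<s. L j = R j) \<and> Lh = Rh" using h by simp
    next
      assume h: "(\<forall>j<s. L j = R j) \<and> Lh = Rh"
      then have "(\<Sum>j\<le>s. L j) = (\<Sum>j\<le>s. R j)" using sL sR by simp
      moreover have "(\<Sum>j<s. L j) = (\<Sum>j<s. R j)" using h by simp
      ultimately have "L s = R s" using split[of L] split[of R] by simp
      then show "\<forall>j\<le>s. L j = R j" using h by (metis le_neq_implies_less)
    qed
    have B: "(\<forall>j\<le>s. (\<Sum>i\<le>s. deriv (P i) z * Vhat s p abar z i j) = (\<Sum>i\<le>s. P i z * Uhat s lam mu nu pa pta a0 thb tht z i j))
       \<longleftrightarrow> (\<forall>j<s. L j = R j) \<and> Lh = Rh"
    proof
      assume h: "\<forall>j\<le>s. (\<Sum>i\<le>s. deriv (P i) z * Vhat s p abar z i j) = (\<Sum>i\<le>s. P i z * Uhat s lam mu nu pa pta a0 thb tht z i j)"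
      have "\<forall>j<s. L j = R j"
      proof (intro allI impI)
        fix j assume "j < s"
        then show "L j = R j" using h hatj[OF \<open>j < s\<close>] by simp
      qed
      moreover have "Lh = Rh" using h unfolding Lh_def Rh_def by simp
      ultimately show "(\<forall>j<s. L j = R j) \<and> Lh = Rh" by simp
    next
      assume h: "(\<forall>j<s. L j = R j) \<and> Lh = Rh"
      show "\<forall>j\<le>s. (\<Sum>i\<le>s. deriv (P i) z * Vhat s p abar z i j) = (\<Sum>i\<le>s. P i z * Uhat s lam mu nu pa pta a0 thb tht z i j)"
      proof (intro allI impI)
        fix j assume "j \<le> s"
        show "(\<Sum>i\<le>s. deriv (P i) z * Vhat s p abar z i j) = (\<Sum>i\<le>s. P i z * Uhat s lam mu nu pa pta a0 thb tht z i j)"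
        proof (cases "j < s")
          case True then show ?thesis using h hatj[OF True] by simp
        next
          case False then have "j = s" using \<open>j \<le> s\<close> by simp
          then show ?thesis using h unfolding Lh_def Rh_def by simp
        qed
      qed
    qed
    show ?thesis using A B unfolding L_def R_def by simp
  qed
  show ?thesis unfolding row_ode_def using key by blast
qed

end
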